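(* Let $f_{ijk}$ be a triangle face with radii $r_i,r_j,r_k>0$ at its vertices and inversive distances $a=I_{jk}$, $b=I_{ki}$, $c=I_{ij}$, all $>1$, and suppose the edge lengths $l_{ij}=\sqrt{r_i^2+r_j^2+2I_{ij}r_ir_j}$ (and similarly $l_{jk},l_{ki}$) satisfy the triangle inequality. Realize $f_{ijk}$ as a Euclidean triangle in $\mathbb{E}^2$ with these side lengths, and let $\rho_{ijk}$ be the radius of the unique circle orthogonal to the three circles centered at $v_i,v_j,v_k$ with radii $r_i,r_j,r_k$. Then \[r_ir_jr_k\sqrt{\Delta_{abc}}=2\rho_{ijk}\operatorname{Area}(f_{ijk}),\qquad \Delta_{abc}=a^2+b^2+c^2+2abc-1.\]
   Context: The inversive distance of two circles with radii $r_1,r_2$ whose centers are at distance $l$ is $(l^2-r_1^2-r_2^2)/(2r_1r_2)$. *)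

theory Defs
  imports "HOL-Analysis.Analysis"
begin

definition circles_orthogonal :: "real ^ 2 \<Rightarrow> real \<Rightarrow> real ^ 2 \<Rightarrow> real \<Rightarrow> bool" where
  "circles_orthogonal p r q s \<longleftrightarrow> (dist p q)\<^sup>2 = r\<^sup>2 + s\<^sup>2"

definition edge_len :: "real \<Rightarrow> real \<Rightarrow> real \<Rightarrow> real" where
  "edge_len r1 r2 I = sqrt (r1\<^sup>2 + r2\<^sup>2 + 2 * I * r1 * r2)"

end

theory Submission
  imports Defs "HOL-Analysis.Simplex_Content"
begin

lemma key_identity:
  fixes ri rj rk a b c \<rho> ui uj uk wi wj wk :: real
  shows "ri^2 = ui^2+wi^2-\<rho>^2 \<Longrightarrow> rj^2 = uj^2+wj^2-\<rho>^2 \<Longrightarrow> rk^2 = uk^2+wk^2-\<rho>^2 \<Longrightarrow>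
  c*ri*rj = \<rho>^2 - (ui*uj+wi*wj) \<Longrightarrow> a*rj*rk = \<rho>^2 - (uj*uk+wj*wk) \<Longrightarrow> b*rk*ri = \<rho>^2 - (uk*ui+wk*wi) \<Longrightarrow>
  (ri*rj*rk)^2 * (a^2+b^2+c^2+2*a*b*c-1) = \<rho>^2 * ((uk - ui)*(wj-wi) - (uj-ui)*(wk-wi))^2"
  by algebra

lemma dist_sq2: "dist (A :: real ^ 2) B ^ 2 = (A $ 1 - B $ 1) ^ 2 + (A $ 2 - B $ 2) ^ 2"
proof -
  have [simp]: "(UNIV :: 2 set) = {1, 2}" using exhaust_2 by auto
  show ?thesis by (simp add: dist_vec_def dist_real_def)
qed

lemma edge_sq: "r1 > 0 \<Longrightarrow> r2 > 0 \<Longrightarrow> I > 1 \<Longrightarrow> (edge_len r1 r2 I)^2 = r1^2 + r2^2 + 2*I*r1*r2"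
  unfolding edge_len_def
  by (subst real_sqrt_pow2) (auto intro!: add_nonneg_nonneg mult_nonneg_nonneg)

theorem theorem4p1:
  fixes ri rj rk a b c \<rho> :: real and vi vj vk ctr :: "real ^ 2"
  assumes radii: "ri > 0" "rj > 0" "rk > 0"
    and inv: "a > 1" "b > 1" "c > 1"
    and tri: "edge_len ri rj c < edge_len rj rk a + edge_len rk ri b"
             "edge_len rj rk a < edge_len rk ri b + edge_len ri rj c"
             "edge_len rk ri b < edge_len ri rj c + edge_len rj rk a"
    and real: "dist vi vj = edge_len ri rj c" "dist vj vk = edge_len rj rk a"
              "dist vk vi = edge_len rk ri b"
    and circ: "\<rho> > 0" "circles_orthogonal ctr \<rho> vi ri"
              "circles_orthogonal ctr \<rho> vj rj" "circles_orthogonal ctr \<rho> vk rk"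
  shows "ri * rj * rk * sqrt (a\<^sup>2 + b\<^sup>2 + c\<^sup>2 + 2 * a * b * c - 1)
           = 2 * \<rho> * measure lebesgue (convex hull {vi, vj, vk})"
proof -
  define ui where "ui = vi$1 - ctr$1"
  define uj where "uj = vj$1 - ctr$1"
  define uk where "uk = vk$1 - ctr$1"
  define wi where "wi = vi$2 - ctr$2"
  define wj where "wj = vj$2 - ctr$2"
  define wk where "wk = vk$2 - ctr$2"
  define D where "D = (uk - ui)*(wj-wi) - (uj-ui)*(wk-wi)"
  have Hi: "ri^2 = ui^2+wi^2-\<rho>^2" using circ(2) unfolding circles_orthogonal_def dist_sq2 ui_def wi_def
    by (simp add: power2_commute)
  have Hj: "rj^2 = uj^2+wj^2-\<rho>^2" using circ(3) unfolding circles_orthogonal_def dist_sq2 uj_def wj_def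
    by (simp add: power2_commute)
  have Hk: "rk^2 = uk^2+wk^2-\<rho>^2" using circ(4) unfolding circles_orthogonal_def dist_sq2 uk_def wk_def
    by (simp add: power2_commute)
  have Eij: "(ui-uj)^2+(wi-wj)^2 = ri^2+rj^2+2*c*ri*rj"
    using arg_cong[OF real(1), of "\<lambda>x. x^2"] edge_sq[OF radii(1,2) inv(3)]
    unfolding dist_sq2 ui_def uj_def wi_def wj_def by simp
  have Ejk: "(uj-uk)^2+(wj-wk)^2 = rj^2+rk^2+2*a*rj*rk"
    using arg_cong[OF real(2), of "\<lambda>x. x^2"] edge_sq[OF radii(2,3) inv(1)]
    unfolding dist_sq2 uk_def uj_def wk_def wj_def by simp
  have Eki: "(uk-ui)^2+(wk-wi)^2 = rk^2+ri^2+2*b*rk*ri"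
    using arg_cong[OF real(3), of "\<lambda>x. x^2"] edge_sq[OF radii(3,1) inv(2)]
    unfolding dist_sq2 ui_def uk_def wi_def wk_def by simp
  have C: "c*ri*rj = \<rho>^2 - (ui*uj+wi*wj)" using Hi Hj Eij by algebra
  have A: "a*rj*rk = \<rho>^2 - (uj*uk+wj*wk)" using Hj Hk Ejk by algebra
  have B: "b*rk*ri = \<rho>^2 - (uk*ui+wk*wi)" using Hk Hi Eki by algebra
  have id: "(ri*rj*rk)^2 * (a^2+b^2+c^2+2*a*b*c-1) = \<rho>^2 * D^2"
    unfolding D_def by (rule key_identity[OF Hi Hj Hk C A B])
  have cpt: "compact (convex hull {vi, vj, vk})"
    by (intro finite_imp_compact_convex_hull) auto
  have "measure lebesgue (convex hull {vi, vj, vk}) = measure lborel (convex hull {vi, vj, vk})"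
    using cpt by (intro measure_completion) (auto dest: compact_imp_closed)
  also have "\<dots> = \<bar>D\<bar> / 2"
    unfolding content_triangle D_def ui_def uj_def uk_def wi_def wj_def wk_def by simp
  finally have area: "measure lebesgue (convex hull {vi, vj, vk}) = \<bar>D\<bar> / 2" .
  have "ri * rj * rk * sqrt (a\<^sup>2 + b\<^sup>2 + c\<^sup>2 + 2 * a * b * c - 1)
      = sqrt ((ri*rj*rk)^2 * (a^2+b^2+c^2+2*a*b*c-1))"
    using radii by (simp add: real_sqrt_mult)
  also have "\<dots> = sqrt ((\<rho> * D)^2)" using id by (simp add: power_mult_distrib)
  also have "\<dots> = \<rho> * \<bar>D\<bar>" using circ(1) by (simp add: abs_mult)
  finally show ?thesis using area by simp
qed

end
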